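(* Let $d\ge2$, $n\ge1$, let $\gamma$ be a positive conductivity on the lattice graph below, and let $t$ be an integer with $d-1\le t\le dn-1$. Then $T^{(t)}=T_2^{(t)}\circ T_1^{(t)}$, where $T^{(t)},T_1^{(t)},T_2^{(t)}$ are the operators defined in the context.
   Context: Lattice: $D=\{x\in\mathbb Z^d:1\le x_i\le n\ \forall i\}$, $\partial D=\{p\in\mathbb Z^d:\min_{q\in D}\|q-p\|_{\ell^1}=1\}$; $E$ = unordered pairs $pq\subseteq D\cup\partial D$ with $\|p-q\|_{\ell^1}=1$, not both in $\partial D$; $\mathcal N(p)=\{q:pq\in E\}$; each $b\in\partial D$ has a unique neighbour $q_b\in D$. Conductivity $\gamma:E\to(0,\infty)$, symmetric. $(\Delta_\gamma\mathbf u)_p=\sum_{q\in\mathcal N(p)}\gamma_{pq}(\mathbf u_q-\mathbf u_p)$. $S_\gamma\varphi$ is the unique $\mathbf u\in\mathbb R^{D\cup\partial D}$ with $\Delta_\gamma \mathbf u=0$ on $D$, $\mathbf u=\varphi$ on $\partial D$; $(D_\gamma\mathbf u)_b=\gamma_{bq_b}(\mathbf u_{q_b}-\mathbf u_b)$ for $b\in\partial D$; $\Lambda_\gamma=D_\gamma\circ S_\gamma$. Functions on a subset are extended by zero. For $x\in\mathbb Z^d$ let $s(x)=\sum_i x_i$. Define $L_t=\{x\in D:s(x)=t\}$, $L_t^{\mathcal S}=\{x\in D:s(x)\le t\}$, $K_t=\{x\in\partial D:s(x)=t\}$, $K_t^+=\{x\in K_t:\max_i x_i=n+1\}$, $K_t^-=\{x\in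 K_t:\min_i x_i=0\}$, $K_t^{\mathcal S\pm}=\bigcup_{\ell\le t}K_\ell^\pm$, $J_t^{\mathcal S}=K_t^{\mathcal S-}\cup K_{t+1}^{\mathcal S+}$. Operators: $T^{(t)}:\mathbb R^{J_t^{\mathcal S}}\to\mathbb R^{\partial D\setminus J_t^{\mathcal S}}$, $\varphi\mapsto(\Lambda_\gamma\varphi)|_{\partial D\setminus J_t^{\mathcal S}}$; $T_1^{(t)}:\mathbb R^{J_t^{\mathcal S}}\to\mathbb R^{L_{t+1}}$, $\varphi\mapsto(S_\gamma\varphi)|_{L_{t+1}}$. $T_2^{(t)}:\mathbb R^{L_{t+1}}\to\mathbb R^{\partial D\setminus J_t^{\mathcal S}}$ is the Dirichlet-to-Neumann map of the upper part: for $\mathbf y\in\mathbb R^{L_{t+1}}$ let $\mathbf w$ be the unique function on $(D\setminus L_t^{\mathcal S})\cup(\partial D\setminus J_t^{\mathcal S})$ with $\mathbf w=\mathbf y$ on $L_{t+1}$, $\mathbf w=0$ on $\partial D\setminus J_t^{\mathcal S}$ and $(\Delta_\gamma\mathbf w)_p=0$ for all $p\in D\setminus L_{t+1}^{\mathcal S}$; then $(T_2^{(t)}\mathbf y)_b=\gamma_{bq_b}(\mathbf w_{q_b}-\mathbf w_b)$ for $b\in\partial D\setminus J_t^{\mathcal S}$. *)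

theory Defs
  imports Complex_Main
begin

text \<open>Lattice points of Z^d are represented as integer lists of length d.
  Real-valued functions on a finite subset of Z^d are represented as functions
  int list => real that are extended by zero outside the subset.\<close>

definition l1dist :: "int list \<Rightarrow> int list \<Rightarrow> int" where
  "l1dist x y = (\<Sum>i<length x. \<bar>x ! i - y ! i\<bar>)"

definition ssum :: "int list \<Rightarrow> int" where
  "ssum x = sum_list x"

definition dom_D :: "nat \<Rightarrow> nat \<Rightarrow> int list set" where
  "dom_D d n = {x. length x = d \<and> (\<forall>i<d. 1 \<le> x ! i \<and> x ! i \<le> int n)}"

definition bdry :: "nat \<Rightarrow> nat \<Rightarrow> int list set" where
  "bdry d n = {p. length p = d \<and> p \<notin> dom_D d n \<and> (\<exists>q\<in>dom_D d n. l1dist q p = 1)}"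

definition edge :: "nat \<Rightarrow> nat \<Rightarrow> int list \<Rightarrow> int list \<Rightarrow> bool" where
  "edge d n p q \<longleftrightarrow> p \<in> dom_D d n \<union> bdry d n \<and> q \<in> dom_D d n \<union> bdry d n
     \<and> l1dist p q = 1 \<and> \<not> (p \<in> bdry d n \<and> q \<in> bdry d n)"

definition nbrs :: "nat \<Rightarrow> nat \<Rightarrow> int list \<Rightarrow> int list set" where
  "nbrs d n p = {q. edge d n p q}"

definition conductivity :: "nat \<Rightarrow> nat \<Rightarrow> (int list \<Rightarrow> int list \<Rightarrow> real) \<Rightarrow> bool" where
  "conductivity d n \<gamma> \<longleftrightarrow> (\<forall>p q. edge d n p q \<longrightarrow> \<gamma> p q > 0 \<and> \<gamma> p q = \<gamma> q p)"

definition lap :: "nat \<Rightarrow> nat \<Rightarrow> (int list \<Rightarrow> int list \<Rightarrow> real) \<Rightarrow> (int list \<Rightarrow> real)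
    \<Rightarrow> int list \<Rightarrow> real" where
  "lap d n \<gamma> u p = (\<Sum>q\<in>nbrs d n p. \<gamma> p q * (u q - u p))"

definition restr :: "(int list \<Rightarrow> real) \<Rightarrow> int list set \<Rightarrow> int list \<Rightarrow> real" where
  "restr f A = (\<lambda>x. if x \<in> A then f x else 0)"

definition qb :: "nat \<Rightarrow> nat \<Rightarrow> int list \<Rightarrow> int list" where
  "qb d n b = (THE q. q \<in> dom_D d n \<and> l1dist q b = 1)"

definition Sgam :: "nat \<Rightarrow> nat \<Rightarrow> (int list \<Rightarrow> int list \<Rightarrow> real) \<Rightarrow> (int list \<Rightarrow> real)
    \<Rightarrow> int list \<Rightarrow> real" where
  "Sgam d n \<gamma> \<phi> = (THE u. (\<forall>p\<in>dom_D d n. lap d n \<gamma> u p = 0)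
       \<and> (\<forall>b\<in>bdry d n. u b = \<phi> b)
       \<and> (\<forall>x. x \<notin> dom_D d n \<union> bdry d n \<longrightarrow> u x = 0))"

definition Dgam :: "nat \<Rightarrow> nat \<Rightarrow> (int list \<Rightarrow> int list \<Rightarrow> real) \<Rightarrow> (int list \<Rightarrow> real)
    \<Rightarrow> int list \<Rightarrow> real" where
  "Dgam d n \<gamma> u = (\<lambda>b. if b \<in> bdry d n
       then \<gamma> b (qb d n b) * (u (qb d n b) - u b) else 0)"

definition DtN :: "nat \<Rightarrow> nat \<Rightarrow> (int list \<Rightarrow> int list \<Rightarrow> real) \<Rightarrow> (int list \<Rightarrow> real)
    \<Rightarrow> int list \<Rightarrow> real" where
  "DtN d n \<gamma> \<phi> = Dgam d n \<gamma> (Sgam d n \<gamma> \<phi>)"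

definition Lt :: "nat \<Rightarrow> nat \<Rightarrow> int \<Rightarrow> int list set" where
  "Lt d n t = {x \<in> dom_D d n. ssum x = t}"

definition LSt :: "nat \<Rightarrow> nat \<Rightarrow> int \<Rightarrow> int list set" where
  "LSt d n t = {x \<in> dom_D d n. ssum x \<le> t}"

definition Kt :: "nat \<Rightarrow> nat \<Rightarrow> int \<Rightarrow> int list set" where
  "Kt d n t = {x \<in> bdry d n. ssum x = t}"

definition Kplus :: "nat \<Rightarrow> nat \<Rightarrow> int \<Rightarrow> int list set" where
  "Kplus d n t = {x \<in> Kt d n t. Max (set x) = int n + 1}"

definition Kminus :: "nat \<Rightarrow> nat \<Rightarrow> int \<Rightarrow> int list set" where
  "Kminus d n t = {x \<in> Kt d n t. Min (set x) = 0}"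

definition KSplus :: "nat \<Rightarrow> nat \<Rightarrow> int \<Rightarrow> int list set" where
  "KSplus d n t = (\<Union>l\<in>{l. l \<le> t}. Kplus d n l)"

definition KSminus :: "nat \<Rightarrow> nat \<Rightarrow> int \<Rightarrow> int list set" where
  "KSminus d n t = (\<Union>l\<in>{l. l \<le> t}. Kminus d n l)"

definition JSt :: "nat \<Rightarrow> nat \<Rightarrow> int \<Rightarrow> int list set" where
  "JSt d n t = KSminus d n t \<union> KSplus d n (t + 1)"

text \<open>T^(t): phi in R^{J_t} (extended by zero) mapped to the restriction of
  \<Lambda>_\<gamma> phi to \<partial>D \ J_t.\<close>
definition Top :: "nat \<Rightarrow> nat \<Rightarrow> (int list \<Rightarrow> int list \<Rightarrow> real) \<Rightarrow> int
    \<Rightarrow> (int list \<Rightarrow> real) \<Rightarrow> int list \<Rightarrow> real" where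
  "Top d n \<gamma> t \<phi> = restr (DtN d n \<gamma> \<phi>) (bdry d n - JSt d n t)"

definition T1op :: "nat \<Rightarrow> nat \<Rightarrow> (int list \<Rightarrow> int list \<Rightarrow> real) \<Rightarrow> int
    \<Rightarrow> (int list \<Rightarrow> real) \<Rightarrow> int list \<Rightarrow> real" where
  "T1op d n \<gamma> t \<phi> = restr (Sgam d n \<gamma> \<phi>) (Lt d n (t + 1))"

definition upper_ext :: "nat \<Rightarrow> nat \<Rightarrow> (int list \<Rightarrow> int list \<Rightarrow> real) \<Rightarrow> int
    \<Rightarrow> (int list \<Rightarrow> real) \<Rightarrow> int list \<Rightarrow> real" where
  "upper_ext d n \<gamma> t y = (THE w.
       (\<forall>x. x \<notin> (dom_D d n - LSt d n t) \<union> (bdry d n - JSt d n t) \<longrightarrow> w x = 0)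
     \<and> (\<forall>x\<in>Lt d n (t + 1). w x = y x)
     \<and> (\<forall>b\<in>bdry d n - JSt d n t. w b = 0)
     \<and> (\<forall>p\<in>dom_D d n - LSt d n (t + 1). lap d n \<gamma> w p = 0))"

definition T2op :: "nat \<Rightarrow> nat \<Rightarrow> (int list \<Rightarrow> int list \<Rightarrow> real) \<Rightarrow> int
    \<Rightarrow> (int list \<Rightarrow> real) \<Rightarrow> int list \<Rightarrow> real" where
  "T2op d n \<gamma> t y = (let w = upper_ext d n \<gamma> t y in
     (\<lambda>b. if b \<in> bdry d n - JSt d n t
          then \<gamma> b (qb d n b) * (w (qb d n b) - w b) else 0))"

end

theory Submission
  imports Defs "Jordan_Normal_Form.Determinant"
begin


lemma L_sum:
  fixes L :: "('a \<Rightarrow> real) \<Rightarrow> 'a \<Rightarrow> real"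
  assumes add: "\<And>u v. L (\<lambda>x. u x + v x) = (\<lambda>x. L u x + L v x)"
  and smul: "\<And>c u. L (\<lambda>x. c * u x) = (\<lambda>x. c * L u x)"
  and "finite J"
  shows "L (\<lambda>x. \<Sum>j\<in>J. f j x) = (\<lambda>x. \<Sum>j\<in>J. L (f j) x)"
  using assms(3)
proof (induction J rule: finite_induct)
  case empty
  have "L (\<lambda>x. 0 * (\<lambda>x. 0) x) = (\<lambda>x. 0 * L (\<lambda>x. 0) x)" by (rule smul)
  then show ?case by simp
next
  case (insert a J)
  have "L (\<lambda>x. \<Sum>j\<in>insert a J. f j x) = L (\<lambda>x. f a x + (\<lambda>x. \<Sum>j\<in>J. f j x) x)"
    using insert by simp
  also have "\<dots> = (\<lambda>x. L (f a) x + L (\<lambda>x. \<Sum>j\<in>J. f j x) x)" by (rule add)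
  finally show ?case using insert by simp
qed

lemma fin_solve:
  fixes L :: "('a \<Rightarrow> real) \<Rightarrow> 'a \<Rightarrow> real" and A :: "'a set"
  assumes fin: "finite A"
  and add: "\<And>u v. L (\<lambda>x. u x + v x) = (\<lambda>x. L u x + L v x)"
  and smul: "\<And>c u. L (\<lambda>x. c * u x) = (\<lambda>x. c * L u x)"
  and inj: "\<And>u. (\<forall>x. x \<notin> A \<longrightarrow> u x = 0) \<Longrightarrow> (\<forall>x\<in>A. L u x = 0) \<Longrightarrow> \<forall>x. u x = 0"
  shows "\<exists>u. (\<forall>x. x \<notin> A \<longrightarrow> u x = 0) \<and> (\<forall>x\<in>A. L u x = b x)"
proof -
  define N where "N = card A"
  obtain h where h: "bij_betw h {0..<N} A" using ex_bij_betw_nat_finite[OF fin] N_def by blast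
  define \<delta> where "\<delta> j = (\<lambda>x. if x = h j then 1 else (0::real))" for j
  define M where "M = mat N N (\<lambda>(i,j). L (\<delta> j) (h i))"
  define U where "U v = (\<lambda>x. \<Sum>j<N. v $ j * \<delta> j x)" for v :: "real vec"
  have hinj: "\<And>i j. i < N \<Longrightarrow> j < N \<Longrightarrow> h i = h j \<longleftrightarrow> i = j"
    using h unfolding bij_betw_def inj_on_def by auto
  have hA: "\<And>i. i < N \<Longrightarrow> h i \<in> A" using h bij_betw_apply by fastforce
  have Ah: "\<And>x. x \<in> A \<Longrightarrow> \<exists>i<N. x = h i" using h unfolding bij_betw_def by auto
  have LU: "L (U v) (h i) = (M *\<^sub>v v) $ i" if "v \<in> carrier_vec N" "i < N" for v i
  proof -
    have "L (U v) = (\<lambda>x. \<Sum>j<N. L (\<lambda>x. v $ j * \<delta> j x) x)"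
      unfolding U_def by (rule L_sum[OF add smul]) simp
    also have "\<dots> = (\<lambda>x. \<Sum>j<N. v $ j * L (\<delta> j) x)"
      by (simp add: smul)
    finally have "L (U v) (h i) = (\<Sum>j<N. v $ j * L (\<delta> j) (h i))" by simp
    also have "\<dots> = (M *\<^sub>v v) $ i"
      using that unfolding M_def by (auto simp: scalar_prod_def lessThan_atLeast0 mult.commute intro!: sum.cong)
    finally show ?thesis .
  qed
  have Uh: "U v (h j) = v $ j" if "j < N" for v j
  proof -
    have "U v (h j) = (\<Sum>k<N. (if k = j then v $ k else 0))"
      unfolding U_def \<delta>_def using that hinj by (intro sum.cong) auto
    then show ?thesis using that by simp
  qed
  have Usupp: "\<forall>x. x \<notin> A \<longrightarrow> U v x = 0" for v
    unfolding U_def \<delta>_def using hA by (auto intro!: sum.neutral)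
  have Mc: "M \<in> carrier_mat N N" unfolding M_def by simp
  have "det M \<noteq> 0"
  proof
    assume "det M = 0"
    then obtain v where v: "v \<in> carrier_vec N" "v \<noteq> 0\<^sub>v N" "M *\<^sub>v v = 0\<^sub>v N"
      using det_0_iff_vec_prod_zero_field[OF Mc] by blast
    have "\<forall>x\<in>A. L (U v) x = 0"
    proof
      fix x assume "x \<in> A"
      then obtain i where "i < N" "x = h i" using Ah by blast
      then show "L (U v) x = 0" using LU[OF v(1)] v(3) by simp
    qed
    then have "\<forall>x. U v x = 0" using inj Usupp by blast
    then have "v = 0\<^sub>v N" using Uh v(1) by (intro eq_vecI) (auto, metis)
    then show False using v(2) by simp
  qed
  then have "M \<in> Units (ring_mat TYPE(real) N ())" by (rule det_non_zero_imp_unit[OF Mc])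
  then obtain B where B: "B \<in> carrier_mat N N" "M * B = 1\<^sub>m N"
    unfolding Units_def ring_mat_def by auto
  define w where "w = B *\<^sub>v vec N (\<lambda>i. b (h i))"
  have wc: "w \<in> carrier_vec N" using B unfolding w_def by simp
  have Mw: "M *\<^sub>v w = vec N (\<lambda>i. b (h i))"
    unfolding w_def using B Mc
    by (metis assoc_mult_mat_vec one_mult_mat_vec vec_carrier)
  show ?thesis
  proof (intro exI conjI)
    show "\<forall>x. x \<notin> A \<longrightarrow> U w x = 0" by (rule Usupp)
    show "\<forall>x\<in>A. L (U w) x = b x"
    proof
      fix x assume "x \<in> A"
      then obtain i where "i < N" "x = h i" using Ah by blast
      then show "L (U w) x = b x" using LU[OF wc] Mw by simp
    qed
  qed
qed


lemma l1dist_upd: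
  assumes "i < length p"
  shows "l1dist p (p[i := v]) = \<bar>p!i - v\<bar>" "l1dist (p[i := v]) p = \<bar>p!i - v\<bar>"
proof -
  have "l1dist p (p[i := v]) = (\<Sum>j<length p. if j = i then \<bar>p!i - v\<bar> else 0)"
    unfolding l1dist_def by (intro sum.cong) auto
  then show "l1dist p (p[i := v]) = \<bar>p!i - v\<bar>" using assms by simp
  have "l1dist (p[i := v]) p = (\<Sum>j<length p. if j = i then \<bar>p!i - v\<bar> else 0)"
    unfolding l1dist_def by (intro sum.cong) auto
  then show "l1dist (p[i := v]) p = \<bar>p!i - v\<bar>" using assms by simp
qed

lemma l1_one:
  assumes "length p = length q" "l1dist p q = 1"
  shows "\<exists>i<length p. q = p[i := q!i] \<and> \<bar>p!i - q!i\<bar> = 1"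
proof -
  define f where "f j = \<bar>p!j - q!j\<bar>" for j
  have s: "(\<Sum>j<length p. f j) = 1" using assms unfolding l1dist_def f_def by simp
  obtain i where i: "i < length p" "f i \<noteq> 0"
  proof (rule ccontr)
    assume "\<not> thesis"
    then have "\<forall>j<length p. f j = 0" using that by blast
    then have "(\<Sum>j<length p. f j) = 0" by simp
    then show False using s by simp
  qed
  have nn: "\<And>j. f j \<ge> 0" unfolding f_def by simp
  have "(\<Sum>j<length p. f j) = f i + (\<Sum>j\<in>{..<length p} - {i}. f j)"
    using i by (simp add: sum.remove)
  moreover have "(\<Sum>j\<in>{..<length p} - {i}. f j) \<ge> 0" using nn by (simp add: sum_nonneg)
  moreover have "f i \<ge> 1" using i nn[of i] by linarith
  ultimately have fi: "f i = 1" and r: "(\<Sum>j\<in>{..<length p} - {i}. f j) = 0" using s by linarith+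
  have "\<forall>j\<in>{..<length p} - {i}. f j = 0"
    using r nn by (subst (asm) sum_nonneg_eq_0_iff) auto
  then have eq: "\<forall>j<length p. j \<noteq> i \<longrightarrow> p!j = q!j" unfolding f_def by auto
  have "q = p[i := q!i]"
    using eq assms(1) i(1) by (intro nth_equalityI) (auto simp: nth_list_update split: if_splits)
  then show ?thesis using i fi unfolding f_def by blast
qed

lemma ssum_upd: "i < length p \<Longrightarrow> ssum (p[i := v]) = ssum p + v - p!i"
  unfolding ssum_def
proof (induction p arbitrary: i)
  case Nil then show ?case by simp
next
  case (Cons a p) then show ?case by (cases i) auto
qed

lemma upd_other: "b = q[i := v] \<Longrightarrow> j \<noteq> i \<Longrightarrow> b!j = q!j" by simp

lemma len_D: "x \<in> dom_D d n \<Longrightarrow> length x = d" unfolding dom_D_def by auto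
lemma len_B: "x \<in> bdry d n \<Longrightarrow> length x = d" unfolding bdry_def by auto

lemma nbrs_sub:
  assumes "p \<in> dom_D d n"
  shows "nbrs d n p \<subseteq> (\<lambda>(i,c). p[i := p!i + c]) ` ({..<d} \<times> {-1,1})"
proof
  fix q assume "q \<in> nbrs d n p"
  then have e: "edge d n p q" unfolding nbrs_def by simp
  then have lq: "length q = d" using len_D len_B unfolding edge_def by blast
  have lp: "length p = d" using len_D assms by blast
  obtain i where i: "i < d" "q = p[i := q!i]" "\<bar>p!i - q!i\<bar> = 1"
    using l1_one[of p q] e lp lq unfolding edge_def by auto
  then have "q!i = p!i + 1 \<or> q!i = p!i + (-1)" by linarith
  then have "q!i - p!i \<in> {-1,1}" by auto
  moreover have "(\<lambda>(i,c). p[i := p!i + c]) (i, q!i - p!i) = p[i := q!i]" by simp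
  then have "q = (\<lambda>(i,c). p[i := p!i + c]) (i, q!i - p!i)" using i(2) by simp
  ultimately show "q \<in> (\<lambda>(i,c). p[i := p!i + c]) ` ({..<d} \<times> {-1,1})"
    using i(1) by (metis (no_types, lifting) SigmaI image_eqI lessThan_iff)
qed

lemma finite_nbrs: "p \<in> dom_D d n \<Longrightarrow> finite (nbrs d n p)"
  by (rule finite_subset[OF nbrs_sub]) auto

lemma nbrs_in: "q \<in> nbrs d n p \<Longrightarrow> q \<in> dom_D d n \<union> bdry d n"
  unfolding nbrs_def edge_def by auto

lemma D_B_disj: "x \<in> bdry d n \<Longrightarrow> x \<notin> dom_D d n"
  unfolding bdry_def by auto

lemma qb_prop:
  assumes "b \<in> bdry d n"
  shows "qb d n b \<in> dom_D d n \<and> l1dist (qb d n b) b = 1"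
proof -
  have ex: "\<exists>q. q \<in> dom_D d n \<and> l1dist q b = 1" using assms unfolding bdry_def by auto
  have bD: "b \<notin> dom_D d n" using assms unfolding bdry_def by auto
  have lb: "length b = d" using len_B assms by blast
  have key: "\<exists>i<d. (\<forall>j<d. j \<noteq> i \<longrightarrow> q!j = b!j) \<and> \<not>(1 \<le> b!i \<and> b!i \<le> int n)
       \<and> \<bar>q!i - b!i\<bar> = 1" if q: "q \<in> dom_D d n" "l1dist q b = 1" for q
  proof -
    have lq: "length q = d" using len_D q by blast
    obtain i where i: "i < d" "b = q[i := b!i]" "\<bar>q!i - b!i\<bar> = 1"
      using l1_one[of q b] q lq lb by auto
    have "\<not>(1 \<le> b!i \<and> b!i \<le> int n)"
    proof
      assume "1 \<le> b!i \<and> b!i \<le> int n"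
      have "1 \<le> b!j \<and> b!j \<le> int n" if "j < d" for j
      proof (cases "j = i")
        case True then show ?thesis using \<open>1 \<le> b!i \<and> b!i \<le> int n\<close> by simp
      next
        case False then have "b!j = q!j" using upd_other[OF i(2)] by blast
        then show ?thesis using q(1) that unfolding dom_D_def by auto
      qed
      then have "b \<in> dom_D d n" using lb unfolding dom_D_def by simp
      then show False using bD by simp
    qed
    moreover have "\<forall>j<d. j \<noteq> i \<longrightarrow> q!j = b!j" using upd_other[OF i(2)] by auto
    ultimately show ?thesis using i by blast
  qed
  have uniq: "q1 = q2" if a12: "q1 \<in> dom_D d n" "l1dist q1 b = 1" and a34: "q2 \<in> dom_D d n" "l1dist q2 b = 1" for q1 q2
  proof -
    obtain i1 where i1: "i1<d" "\<forall>j<d. j \<noteq> i1 \<longrightarrow> q1!j = b!j" "\<not>(1 \<le> b!i1 \<and> b!i1 \<le> int n)"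
       "\<bar>q1!i1 - b!i1\<bar> = 1" using key[OF a12] by blast
    obtain i2 where i2: "i2<d" "\<forall>j<d. j \<noteq> i2 \<longrightarrow> q2!j = b!j" "\<not>(1 \<le> b!i2 \<and> b!i2 \<le> int n)"
       "\<bar>q2!i2 - b!i2\<bar> = 1" using key[OF a34] by blast
    have r1: "1 \<le> q1!j \<and> q1!j \<le> int n" if "j<d" for j using that \<open>q1 \<in> dom_D d n\<close> unfolding dom_D_def by auto
    have r2: "1 \<le> q2!j \<and> q2!j \<le> int n" if "j<d" for j using that \<open>q2 \<in> dom_D d n\<close> unfolding dom_D_def by auto
    have "i1 = i2"
    proof (rule ccontr)
      assume "i1 \<noteq> i2"
      then have "q1!i2 = b!i2" using i1 i2 by auto
      then show False using r1[OF i2(1)] i2(3) by simp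
    qed
    then have "q1!i1 = q2!i1" using i1 i2 r1[OF i1(1)] r2[OF i1(1)] by auto
    have l12: "length q1 = d" "length q2 = d" using len_D a12(1) a34(1) by blast+
    show ?thesis
    proof (rule nth_equalityI)
      show "length q1 = length q2" using l12 by simp
      fix j assume "j < length q1"
      then show "q1!j = q2!j" using i1 i2 \<open>i1 = i2\<close> \<open>q1!i1 = q2!i1\<close> l12 by (cases "j = i1") auto
    qed
  qed
  have "\<exists>!q. q \<in> dom_D d n \<and> l1dist q b = 1" using ex uniq by blast
  then show ?thesis unfolding qb_def by (rule theI')
qed



lemma finite_D: "finite (dom_D d n)"
proof (rule finite_subset)
  show "dom_D d n \<subseteq> {xs. set xs \<subseteq> {1..int n} \<and> length xs = d}"
    unfolding dom_D_def by (auto simp: in_set_conv_nth)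
  show "finite {xs. set xs \<subseteq> {1..int n} \<and> length xs = d}"
    by (rule finite_lists_length_eq) simp
qed

lemma maxprin:
  fixes f :: "int list \<Rightarrow> nat"
  assumes cond: "conductivity d n \<gamma>"
  and out: "\<forall>x. x \<notin> dom_D d n \<longrightarrow> v x = 0"
  and H: "\<forall>p\<in>dom_D d n. v p > 0 \<longrightarrow> lap d n \<gamma> v p = 0 \<and> (\<exists>q\<in>nbrs d n p. f q < f p)"
  shows "v x \<le> 0"
proof (rule ccontr)
  assume "\<not> v x \<le> 0"
  then have xD: "x \<in> dom_D d n" and vx: "v x > 0" using out by force+
  define M where "M = Max (v ` dom_D d n)"
  have fin: "finite (v ` dom_D d n)" using finite_D by simp
  have le: "v y \<le> M" for y
  proof (cases "y \<in> dom_D d n")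
    case True then show ?thesis unfolding M_def using fin by simp
  next
    case False
    have "v x \<le> M" unfolding M_def using fin xD by simp
    then show ?thesis using False out vx by simp
  qed
  have Mpos: "M > 0" using le[of x] vx by simp
  have main: "\<forall>p. f p = k \<longrightarrow> p \<in> dom_D d n \<longrightarrow> v p = M \<longrightarrow> False" for k
  proof (induction k rule: less_induct)
    case (less k)
    show ?case
    proof (intro allI impI)
      fix p assume fp: "f p = k" and pD: "p \<in> dom_D d n" and vp: "v p = M"
      then have lap0: "lap d n \<gamma> v p = 0" and "\<exists>q\<in>nbrs d n p. f q < f p" using H Mpos by auto
      then obtain q where q: "q \<in> nbrs d n p" "f q < f p" by blast
      have finN: "finite (nbrs d n p)" using finite_nbrs[OF pD] .
      have gpos: "\<gamma> p r > 0" if "r \<in> nbrs d n p" for r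
        using cond that unfolding conductivity_def nbrs_def by auto
      have terms: "\<forall>r\<in>nbrs d n p. \<gamma> p r * (v r - v p) \<le> 0"
        using gpos le vp by (simp add: mult_nonneg_nonpos less_imp_le)
      have "(\<Sum>r\<in>nbrs d n p. \<gamma> p r * (v r - v p)) = 0" using lap0 unfolding lap_def .
      then have s0: "(\<Sum>r\<in>nbrs d n p. -(\<gamma> p r * (v r - v p))) = 0" by (simp add: sum_negf)
      have nn: "\<And>r. r \<in> nbrs d n p \<Longrightarrow> 0 \<le> -(\<gamma> p r * (v r - v p))" using terms by simp
      have "\<forall>r\<in>nbrs d n p. -(\<gamma> p r * (v r - v p)) = 0"
        using sum_nonneg_eq_0_iff[OF finN nn] s0 by simp
      then have "\<forall>r\<in>nbrs d n p. \<gamma> p r * (v r - v p) = 0" by simp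
      then have "\<gamma> p q * (v q - v p) = 0" using q(1) by blast
      then have "v q = M" using gpos[OF q(1)] vp by simp
      then have "q \<in> dom_D d n" using out Mpos by force
      then show False using less.IH[of "f q"] q(2) fp \<open>v q = M\<close> by blast
    qed
  qed
  have "M \<in> v ` dom_D d n" unfolding M_def using fin xD by (intro Max_in) auto
  then obtain p where "p \<in> dom_D d n" "v p = M" by auto
  then show False using main by blast
qed

lemma down_nbr:
  assumes pD: "p \<in> dom_D d n" and i: "i < d" 
  shows "p[i := p!i - 1] \<in> nbrs d n p" and "p!i \<ge> 2 \<Longrightarrow> p[i := p!i - 1] \<in> dom_D d n"
proof -
  let ?q = "p[i := p!i - 1]"
  have lp: "length p = d" using len_D pD by blast
  have c: "1 \<le> p!j \<and> p!j \<le> int n" if "j < d" for j using pD that unfolding dom_D_def by auto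
  show qD: "p!i \<ge> 2 \<Longrightarrow> ?q \<in> dom_D d n"
  proof -
    assume p2: "p!i \<ge> 2"
    have "1 \<le> ?q!j \<and> ?q!j \<le> int n" if "j < d" for j
    proof (cases "j = i")
      case True then show ?thesis using p2 c[OF i] lp i by simp
    next
      case False then show ?thesis using c[OF that] by simp
    qed
    then show ?thesis using lp unfolding dom_D_def by simp
  qed
  have dist: "l1dist p ?q = 1" using l1dist_upd(1)[of i p] lp i by simp
  have "?q \<in> dom_D d n \<union> bdry d n"
  proof (cases "p!i \<ge> 2")
    case True then show ?thesis using qD by simp
  next
    case False
    then have "?q ! i = 0" using c[OF i] lp i by simp
    then have "?q \<notin> dom_D d n" using i unfolding dom_D_def by auto
    then have "?q \<in> bdry d n" using lp pD dist unfolding bdry_def by auto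
    then show ?thesis by simp
  qed
  then show "?q \<in> nbrs d n p" unfolding nbrs_def edge_def using pD dist D_B_disj by auto
qed

lemma lap_diff: "lap d n \<gamma> (\<lambda>x. u x - v x) p = lap d n \<gamma> u p - lap d n \<gamma> v p"
  unfolding lap_def by (simp add: sum_subtractf[symmetric] algebra_simps)

lemma lap_add: "lap d n \<gamma> (\<lambda>x. u x + v x) = (\<lambda>p. lap d n \<gamma> u p + lap d n \<gamma> v p)"
  unfolding lap_def by (rule ext) (simp add: sum.distrib[symmetric] algebra_simps)

lemma lap_smul: "lap d n \<gamma> (\<lambda>x. c * u x) = (\<lambda>p. c * lap d n \<gamma> u p)"
  unfolding lap_def by (rule ext) (simp add: sum_distrib_left algebra_simps)

definition SP where
  "SP d n \<gamma> \<phi> u \<longleftrightarrow> (\<forall>p\<in>dom_D d n. lap d n \<gamma> u p = 0)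
       \<and> (\<forall>b\<in>bdry d n. u b = \<phi> b)
       \<and> (\<forall>x. x \<notin> dom_D d n \<union> bdry d n \<longrightarrow> u x = 0)"

lemma S_le:
  assumes "d \<ge> 1" "conductivity d n \<gamma>" "SP d n \<gamma> \<phi> u1" "SP d n \<gamma> \<phi> u2"
  shows "u1 x - u2 x \<le> 0"
proof (rule maxprin[where f = "\<lambda>p. nat (p!0)", OF assms(2)])
  show "\<forall>x. x \<notin> dom_D d n \<longrightarrow> u1 x - u2 x = 0"
    using assms(3,4) unfolding SP_def by (metis Un_iff diff_self)
  show "\<forall>p\<in>dom_D d n. 0 < u1 p - u2 p \<longrightarrow>
     lap d n \<gamma> (\<lambda>x. u1 x - u2 x) p = 0 \<and> (\<exists>q\<in>nbrs d n p. nat (q ! 0) < nat (p ! 0))"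
  proof (intro ballI impI conjI)
    fix p assume pD: "p \<in> dom_D d n"
    show "lap d n \<gamma> (\<lambda>x. u1 x - u2 x) p = 0" using lap_diff pD assms(3,4) unfolding SP_def by simp
    have "1 \<le> p!0" using pD assms(1) unfolding dom_D_def by auto
    moreover have "p[0 := p!0 - 1] ! 0 = p!0 - 1" using len_D[OF pD] assms(1) by simp
    ultimately show "\<exists>q\<in>nbrs d n p. nat (q ! 0) < nat (p ! 0)"
      using down_nbr(1)[OF pD, of 0] assms(1) by (intro bexI[of _ "p[0 := p!0 - 1]"]) auto
  qed
qed

lemma S_uniq:
  assumes "d \<ge> 1" "conductivity d n \<gamma>" "SP d n \<gamma> \<phi> u1" "SP d n \<gamma> \<phi> u2"
  shows "u1 = u2"
proof
  fix x
  show "u1 x = u2 x" using S_le[OF assms, of x] S_le[OF assms(1,2,4,3), of x] by simp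
qed

lemma S_exists:
  assumes "d \<ge> 1" "conductivity d n \<gamma>"
  shows "\<exists>u. SP d n \<gamma> \<phi> u"
proof -
  define \<phi>b where "\<phi>b = restr \<phi> (bdry d n)"
  have "\<exists>v. (\<forall>x. x \<notin> dom_D d n \<longrightarrow> v x = 0) \<and>
        (\<forall>x\<in>dom_D d n. lap d n \<gamma> v x = - lap d n \<gamma> \<phi>b x)"
  proof (rule fin_solve[OF finite_D lap_add lap_smul])
    fix u assume u0: "\<forall>x. x \<notin> dom_D d n \<longrightarrow> u x = 0" and l0: "\<forall>x\<in>dom_D d n. lap d n \<gamma> u x = 0"
    have "SP d n \<gamma> (\<lambda>_. 0) u" unfolding SP_def using u0 l0 D_B_disj by blast
    moreover have "SP d n \<gamma> (\<lambda>_. 0) (\<lambda>_. 0)" unfolding SP_def lap_def by simp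
    ultimately have "u = (\<lambda>_. 0)" using S_uniq assms by blast
    then show "\<forall>x. u x = 0" by simp
  qed
  then obtain v where v: "\<forall>x. x \<notin> dom_D d n \<longrightarrow> v x = 0"
     "\<forall>x\<in>dom_D d n. lap d n \<gamma> v x = - lap d n \<gamma> \<phi>b x" by blast
  have "SP d n \<gamma> \<phi> (\<lambda>x. v x + \<phi>b x)"
  proof -
    have "\<forall>p\<in>dom_D d n. lap d n \<gamma> (\<lambda>x. v x + \<phi>b x) p = 0" using v(2) by (simp add: lap_add)
    moreover have "\<forall>b\<in>bdry d n. v b + \<phi>b b = \<phi> b" using v(1) D_B_disj unfolding \<phi>b_def restr_def by auto
    moreover have "\<forall>x. x \<notin> dom_D d n \<union> bdry d n \<longrightarrow> v x + \<phi>b x = 0"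
      using v(1) unfolding \<phi>b_def restr_def by auto
    ultimately show ?thesis unfolding SP_def by blast
  qed
  then show ?thesis by blast
qed

lemma Sgam_SP:
  assumes "d \<ge> 1" "conductivity d n \<gamma>"
  shows "SP d n \<gamma> \<phi> (Sgam d n \<gamma> \<phi>)"
proof -
  have "\<exists>!u. SP d n \<gamma> \<phi> u" using S_exists[OF assms] S_uniq[OF assms] by blast
  then have "SP d n \<gamma> \<phi> (THE u. SP d n \<gamma> \<phi> u)" by (rule theI')
  then show ?thesis unfolding Sgam_def SP_def .
qed


lemma KSminus_iff: "x \<in> KSminus d n t \<longleftrightarrow> x \<in> bdry d n \<and> ssum x \<le> t \<and> Min (set x) = 0"
  unfolding KSminus_def Kminus_def Kt_def by auto

lemma KSplus_iff: "x \<in> KSplus d n t \<longleftrightarrow> x \<in> bdry d n \<and> ssum x \<le> t \<and> Max (set x) = int n + 1"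
  unfolding KSplus_def Kplus_def Kt_def by auto

definition UP where
  "UP d n \<gamma> t y w \<longleftrightarrow>
       (\<forall>x. x \<notin> (dom_D d n - LSt d n t) \<union> (bdry d n - JSt d n t) \<longrightarrow> w x = 0)
     \<and> (\<forall>x\<in>Lt d n (t + 1). w x = y x)
     \<and> (\<forall>b\<in>bdry d n - JSt d n t. w b = 0)
     \<and> (\<forall>p\<in>dom_D d n - LSt d n (t + 1). lap d n \<gamma> w p = 0)"

lemma ssum_le_d:
  assumes "length p = d" "\<forall>i<d. p!i \<le> 1"
  shows "ssum p \<le> int d"
proof -
  have "ssum p = (\<Sum>i = 0..<length p. p ! i)" unfolding ssum_def by (rule sum_list_sum_nth)
  also have "\<dots> \<le> (\<Sum>i = 0..<length p. 1)" using assms by (intro sum_mono) auto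
  finally show ?thesis using assms(1) by simp
qed

lemma U_le:
  assumes d2: "d \<ge> 2" and cond: "conductivity d n \<gamma>" and tl: "int d - 1 \<le> t"
    and w1: "UP d n \<gamma> t y w1" and w2: "UP d n \<gamma> t y w2"
  shows "w1 x - w2 x \<le> 0"
proof (rule maxprin[where f = "\<lambda>p. nat (ssum p)", OF cond])
  show "\<forall>x. x \<notin> dom_D d n \<longrightarrow> w1 x - w2 x = 0"
  proof (intro allI impI)
    fix x assume "x \<notin> dom_D d n"
    then show "w1 x - w2 x = 0" using w1 w2 unfolding UP_def by (cases "x \<in> bdry d n - JSt d n t") auto
  qed
  show "\<forall>p\<in>dom_D d n. 0 < w1 p - w2 p \<longrightarrow>
     lap d n \<gamma> (\<lambda>x. w1 x - w2 x) p = 0 \<and> (\<exists>q\<in>nbrs d n p. nat (ssum q) < nat (ssum p))"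
  proof (intro ballI impI)
    fix p assume pD: "p \<in> dom_D d n" and pos: "0 < w1 p - w2 p"
    have "p \<notin> bdry d n" using pD D_B_disj by blast
    have "p \<notin> LSt d n t"
    proof
      assume "p \<in> LSt d n t"
      then have "p \<notin> (dom_D d n - LSt d n t) \<union> (bdry d n - JSt d n t)" using \<open>p \<notin> bdry d n\<close> by blast
      then have "w1 p = 0 \<and> w2 p = 0" using w1 w2 unfolding UP_def by blast
      then show False using pos by simp
    qed
    moreover have "p \<notin> Lt d n (t+1)" using pos w1 w2 unfolding UP_def by auto
    ultimately have sp: "ssum p \<ge> t + 2" using pD unfolding LSt_def Lt_def by auto
    then have "p \<in> dom_D d n - LSt d n (t+1)" using pD unfolding LSt_def by auto
    then have l: "lap d n \<gamma> (\<lambda>x. w1 x - w2 x) p = 0" using w1 w2 lap_diff unfolding UP_def by simp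
    have lp: "length p = d" using len_D pD by blast
    obtain i where i: "i < d" "p!i \<ge> 2"
    proof (rule ccontr)
      assume "\<not> thesis"
      then have "\<forall>i<d. p!i \<le> 1" using that by force
      then have "ssum p \<le> int d" using ssum_le_d lp by blast
      then show False using sp tl by simp
    qed
    have "ssum (p[i := p!i - 1]) = ssum p - 1" using ssum_upd[of i p] i lp by simp
    then have "nat (ssum (p[i := p!i - 1])) < nat (ssum p)" using sp tl d2 by simp
    then show "lap d n \<gamma> (\<lambda>x. w1 x - w2 x) p = 0 \<and> (\<exists>q\<in>nbrs d n p. nat (ssum q) < nat (ssum p))"
      using l down_nbr(1)[OF pD i(1)] by blast
  qed
qed

lemma upper_UP:
  assumes "d \<ge> 2" "conductivity d n \<gamma>" "int d - 1 \<le> t" "UP d n \<gamma> t y w"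
  shows "upper_ext d n \<gamma> t y = w"
proof -
  have "(THE w. UP d n \<gamma> t y w) = w"
  proof (rule the_equality)
    show "UP d n \<gamma> t y w" by fact
    fix w' assume "UP d n \<gamma> t y w'"
    then show "w' = w" using U_le[OF assms(1-3) \<open>UP d n \<gamma> t y w'\<close> assms(4)]
        U_le[OF assms(1-3) assms(4) \<open>UP d n \<gamma> t y w'\<close>] by (intro ext) (simp add: order_antisym)
  qed
  then show ?thesis unfolding upper_ext_def UP_def .
qed

lemma nbr_up:
  assumes d2: "d \<ge> 2" and p: "p \<in> dom_D d n - LSt d n (t+1)" and q: "q \<in> nbrs d n p"
  shows "q \<in> (dom_D d n - LSt d n t) \<union> (bdry d n - JSt d n t)"
proof -
  have e: "edge d n p q" using q unfolding nbrs_def by simp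
  have pD: "p \<in> dom_D d n" using p by simp
  have lp: "length p = d" using len_D pD by blast
  have qDB: "q \<in> dom_D d n \<union> bdry d n" using e unfolding edge_def by simp
  then have lq: "length q = d" using len_D len_B by blast
  obtain i where i: "i < d" "q = p[i := q!i]" "\<bar>p!i - q!i\<bar> = 1"
    using l1_one[of p q] e lp lq unfolding edge_def by auto
  have sp: "ssum p \<ge> t + 2" using p unfolding LSt_def by auto
  have sq: "ssum q = ssum p + q!i - p!i" using ssum_upd[of i p "q!i"] i lp by simp
  have cp: "1 \<le> p!j \<and> p!j \<le> int n" if "j < d" for j using pD that unfolding dom_D_def by auto
  show ?thesis
  proof (cases "q \<in> dom_D d n")
    case True
    then show ?thesis using sq sp i(3) unfolding LSt_def by auto
  next
    case False
    then have qB: "q \<in> bdry d n" using qDB by simp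
    have "q \<notin> KSminus d n t" using sq sp i(3) unfolding KSminus_iff by auto
    moreover have "q \<notin> KSplus d n (t+1)"
    proof
      assume "q \<in> KSplus d n (t+1)"
      then have M: "Max (set q) = int n + 1" and le: "ssum q \<le> t + 1" unfolding KSplus_iff by auto
      have "set q \<noteq> {}" using lq d2 by auto
      then have "int n + 1 \<in> set q" using M Max_in[of "set q"] by auto
      then obtain j where j: "j < d" "q!j = int n + 1" using lq by (auto simp: in_set_conv_nth)
      show False
      proof (cases "j = i")
        case True
        then show ?thesis using j sq sp le i(3) cp[OF i(1)] by auto
      next
        case False
        then have "q!j = p!j" using upd_other[OF i(2)] by blast
        then show ?thesis using j cp[OF j(1)] by simp
      qed
    qed
    ultimately show ?thesis using qB unfolding JSt_def by auto
  qed
qed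

lemma qb_up:
  assumes d2: "d \<ge> 2" and b: "b \<in> bdry d n - JSt d n t"
  shows "qb d n b \<in> dom_D d n - LSt d n t"
proof -
  let ?q = "qb d n b"
  have bB: "b \<in> bdry d n" using b by simp
  have q: "?q \<in> dom_D d n" "l1dist ?q b = 1" using qb_prop[OF bB] by auto
  have lb: "length b = d" using len_B bB by blast
  have lq: "length ?q = d" using len_D q(1) by blast
  obtain i where i: "i < d" "b = ?q[i := b!i]" "\<bar>?q!i - b!i\<bar> = 1"
    using l1_one[of ?q b] q lq lb by auto
  have cq: "1 \<le> ?q!j \<and> ?q!j \<le> int n" if "j < d" for j using q(1) that unfolding dom_D_def by auto
  have bD: "b \<notin> dom_D d n" using D_B_disj bB by blast
  have bj: "b!j = ?q!j" if "j < d" "j \<noteq> i" for j using upd_other[OF i(2)] that by blast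
  have nb: "\<not>(1 \<le> b!i \<and> b!i \<le> int n)"
  proof
    assume "1 \<le> b!i \<and> b!i \<le> int n"
    have "\<forall>j<d. 1 \<le> b!j \<and> b!j \<le> int n"
    proof (intro allI impI)
      fix j assume j: "j < d"
      show "1 \<le> b!j \<and> b!j \<le> int n"
        using \<open>1 \<le> b!i \<and> b!i \<le> int n\<close> cq[OF j] bj[OF j] by (cases "j = i") auto
    qed
    then have "b \<in> dom_D d n" using lb unfolding dom_D_def by simp
    then show False using bD by simp
  qed
  have sb: "ssum b = ssum ?q + b!i - ?q!i" using ssum_upd[of i ?q "b!i"] i lq by simp
  have fin: "finite (set b)" by simp
  have "\<not> ssum ?q \<le> t"
  proof
    assume sq: "ssum ?q \<le> t"
    show False
    proof (cases "b!i = ?q!i + 1")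
      case True
      then have bi: "b!i = int n + 1" using nb cq[OF i(1)] by auto
      have "Max (set b) = int n + 1"
      proof (rule Max_eqI[OF fin])
        show "y \<le> int n + 1" if "y \<in> set b" for y
        proof -
          from that obtain j where "j < length b" "b!j = y" by (auto simp: in_set_conv_nth)
          then have "j < d" "b!j = y" using lb by auto
          then show ?thesis using bi bj cq by (cases "j = i") force+
        qed
        show "int n + 1 \<in> set b" using bi i(1) lb by (metis nth_mem)
      qed
      then have "b \<in> KSplus d n (t+1)" using bB sb sq True unfolding KSplus_iff by simp
      then show False using b unfolding JSt_def by simp
    next
      case False
      then have bi: "b!i = 0" using nb cq[OF i(1)] i(3) by auto
      have "Min (set b) = 0"
      proof (rule Min_eqI[OF fin])
        show "0 \<le> y" if "y \<in> set b" for y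
        proof -
          from that obtain j where "j < length b" "b!j = y" by (auto simp: in_set_conv_nth)
          then have "j < d" "b!j = y" using lb by auto
          then show ?thesis using bi bj cq by (cases "j = i") force+
        qed
        show "0 \<in> set b" using bi i(1) lb by (metis nth_mem)
      qed
      then have "b \<in> KSminus d n t" using bB sb sq bi cq[OF i(1)] unfolding KSminus_iff by simp
      then show False using b unfolding JSt_def by simp
    qed
  qed
  then show ?thesis using q(1) unfolding LSt_def by simp
qed

theorem proposition2p1:
  fixes d n :: nat and t :: int and \<gamma> :: "int list \<Rightarrow> int list \<Rightarrow> real"
  assumes "d \<ge> 2" and "n \<ge> 1"
    and "conductivity d n \<gamma>"
    and "int d - 1 \<le> t" and "t \<le> int d * int n - 1"
  shows "\<forall>\<phi>. (\<forall>x. x \<notin> JSt d n t \<longrightarrow> \<phi> x = 0) \<longrightarrow>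
           Top d n \<gamma> t \<phi> = T2op d n \<gamma> t (T1op d n \<gamma> t \<phi>)"
proof (intro allI impI)
  fix \<phi> :: "int list \<Rightarrow> real"
  assume \<phi>0: "\<forall>x. x \<notin> JSt d n t \<longrightarrow> \<phi> x = 0"
  have d1: "d \<ge> 1" using assms(1) by simp
  define u where "u = Sgam d n \<gamma> \<phi>"
  have SPu: "SP d n \<gamma> \<phi> u" unfolding u_def by (rule Sgam_SP[OF d1 assms(3)])
  define R where "R = (dom_D d n - LSt d n t) \<union> (bdry d n - JSt d n t)"
  define w where "w = restr u R"
  have UPw: "UP d n \<gamma> t (T1op d n \<gamma> t \<phi>) w"
    unfolding UP_def
  proof (intro conjI ballI allI impI)
    fix x assume "x \<notin> (dom_D d n - LSt d n t) \<union> (bdry d n - JSt d n t)"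
    then show "w x = 0" unfolding w_def R_def restr_def by auto
  next
    fix x assume x: "x \<in> Lt d n (t+1)"
    then have "x \<in> R" unfolding R_def Lt_def LSt_def by auto
    then show "w x = T1op d n \<gamma> t \<phi> x" using x unfolding w_def T1op_def restr_def u_def by simp
  next
    fix b assume b: "b \<in> bdry d n - JSt d n t"
    then have "b \<in> R" unfolding R_def by simp
    then show "w b = 0" using b SPu \<phi>0 unfolding w_def restr_def SP_def by simp
  next
    fix p assume p: "p \<in> dom_D d n - LSt d n (t+1)"
    then have pR: "p \<in> R" unfolding R_def LSt_def by auto
    have "lap d n \<gamma> w p = lap d n \<gamma> u p"
      unfolding lap_def
    proof (rule sum.cong)
      fix q assume "q \<in> nbrs d n p"
      then have "q \<in> R" using nbr_up[OF assms(1) p] unfolding R_def by blast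
      then show "\<gamma> p q * (w q - w p) = \<gamma> p q * (u q - u p)" using pR unfolding w_def restr_def by simp
    qed simp
    then show "lap d n \<gamma> w p = 0" using SPu p unfolding SP_def by simp
  qed
  have ue: "upper_ext d n \<gamma> t (T1op d n \<gamma> t \<phi>) = w"
    by (rule upper_UP[OF assms(1) assms(3) assms(4) UPw])
  show "Top d n \<gamma> t \<phi> = T2op d n \<gamma> t (T1op d n \<gamma> t \<phi>)"
  proof
    fix b
    show "Top d n \<gamma> t \<phi> b = T2op d n \<gamma> t (T1op d n \<gamma> t \<phi>) b"
    proof (cases "b \<in> bdry d n - JSt d n t")
      case True
      then have "qb d n b \<in> R" "b \<in> R" using qb_up[OF assms(1) True] unfolding R_def by auto
      then show ?thesis using True unfolding Top_def T2op_def Let_def ue restr_def DtN_def Dgam_def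
          w_def u_def by simp
    next
      case False
      then show ?thesis unfolding Top_def T2op_def Let_def restr_def by auto
    qed
  qed
qed

end
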